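(* Let $\mathcal{P}_1,\mathcal{P}_2\subseteq\mathbb{R}^n$ be non-empty topologically closed convex polyhedra. Suppose there exist a linear non-strict inequality constraint $\beta=(\langle \mathbf{a},\mathbf{x}\rangle\le b)$, with $\mathbf{a}\in\mathbb{R}^n\setminus\{\mathbf{0}\}$ and $b\in\mathbb{R}$, and a vector $\mathbf{p}\in\mathbb{R}^n$ such that: (1) $\mathbf{p}$ saturates $\beta$, i.e., $\langle\mathbf{a},\mathbf{p}\rangle=b$; (2) every point of $\mathcal{P}_1$ satisfies $\beta$, while some point of $\mathcal{P}_2$ violates $\beta$; (3) $\mathbf{p}\in\mathcal{P}_1\setminus\mathcal{P}_2$. Then $\mathcal{P}_1\cup\mathcal{P}_2$ is not convex.
   Context: A topologically closed convex polyhedron in $\mathbb{R}^n$ is a set of the form $\{\mathbf{x}\in\mathbb{R}^n : \langle\mathbf{a}_k,\mathbf{x}\rangle\le b_k,\ k=1,\dots,m\}$ for finitely many constraints with $\mathbf{a}_k\neq\mathbf{0}$. *)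

theory Defs
  imports "HOL-Analysis.Analysis"
begin

definition closed_polyhedron :: "(real^'n) set \<Rightarrow> bool" where
  "closed_polyhedron P \<longleftrightarrow>
     (\<exists>(m::nat) (a::nat \<Rightarrow> real^'n) (b::nat \<Rightarrow> real).
        (\<forall>k<m. a k \<noteq> 0) \<and> P = {x. \<forall>k<m. a k \<bullet> x \<le> b k})"

end

theory Submission
  imports Defs
begin

lemma aux:
  fixes d c :: real
  assumes "d > 0" and H: "\<And>t. 0 < t \<Longrightarrow> t \<le> 1 \<Longrightarrow> t * c \<le> - d"
  shows False
proof -
  define t where "t = min 1 (d / (2 * \<bar>c\<bar> + 1))"
  have t0: "0 < t" using assms(1) by (simp add: t_def)
  have t1: "t \<le> 1" by (simp add: t_def)
  have "t * \<bar>c\<bar> \<le> d / (2 * \<bar>c\<bar> + 1) * \<bar>c\<bar>"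
    by (intro mult_right_mono) (auto simp: t_def)
  also have "\<dots> < d"
  proof -
    have "d * \<bar>c\<bar> < d * (2 * \<bar>c\<bar> + 1)"
      using assms(1) by (intro mult_strict_left_mono) auto
    then show ?thesis by (simp add: pos_divide_less_eq)
  qed
  finally have "t * \<bar>c\<bar> < d" .
  moreover have "- (t * \<bar>c\<bar>) \<le> t * c"
  proof -
    have "\<bar>t * c\<bar> = t * \<bar>c\<bar>" using t0 by (simp add: abs_mult)
    moreover have "- \<bar>t * c\<bar> \<le> t * c" using abs_ge_minus_self[of "t * c"] by linarith
    ultimately show ?thesis by linarith
  qed
  ultimately show False using H[OF t0 t1] by linarith
qed

theorem lemma1:
  fixes P1 P2 :: "(real^'n) set" and a p :: "real^'n" and b :: real
  assumes "closed_polyhedron P1" and "closed_polyhedron P2"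
    and "P1 \<noteq> {}" and "P2 \<noteq> {}"
    and "a \<noteq> 0"
    and "a \<bullet> p = b"
    and "\<forall>x\<in>P1. a \<bullet> x \<le> b"
    and "\<exists>x\<in>P2. \<not> (a \<bullet> x \<le> b)"
    and "p \<in> P1" and "p \<notin> P2"
  shows "\<not> convex (P1 \<union> P2)"
proof
  assume cv: "convex (P1 \<union> P2)"
  obtain q where q: "q \<in> P2" "a \<bullet> q > b" using assms(8) by auto
  obtain m and A :: "nat \<Rightarrow> real^'n" and B :: "nat \<Rightarrow> real" where AB: "P2 = {x. \<forall>k<m. A k \<bullet> x \<le> B k}"
    using assms(2) unfolding closed_polyhedron_def by blast
  have inP2: "p + t *\<^sub>R (q - p) \<in> P2" if "0 < t" "t \<le> 1" for t
  proof -
    have "(1 - t) *\<^sub>R p + t *\<^sub>R q \<in> P1 \<union> P2"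
      by (rule convexD[OF cv]) (use assms(9) q(1) that in auto)
    moreover have "(1 - t) *\<^sub>R p + t *\<^sub>R q = p + t *\<^sub>R (q - p)"
      by (simp add: algebra_simps)
    moreover have "a \<bullet> (p + t *\<^sub>R (q - p)) > b"
      using that q(2) assms(6) by (simp add: inner_add_right inner_diff_right)
    ultimately have "p + t *\<^sub>R (q - p) \<in> P1 \<union> P2" "\<not> a \<bullet> (p + t *\<^sub>R (q - p)) \<le> b" by simp_all
    then show ?thesis using assms(7) by blast
  qed
  have "p \<in> P2" unfolding AB
  proof (clarify)
    fix k assume k: "k < m"
    show "A k \<bullet> p \<le> B k"
    proof (rule ccontr)
      assume "\<not> A k \<bullet> p \<le> B k"
      then have d: "A k \<bullet> p - B k > 0" by simp
      show False
      proof (rule aux[OF d])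
        fix t :: real assume "0 < t" "t \<le> 1"
        from inP2[OF this] have "p + t *\<^sub>R (q - p) \<in> {x. \<forall>k<m. A k \<bullet> x \<le> B k}" by (simp only: AB)
        then have "\<forall>k<m. A k \<bullet> (p + t *\<^sub>R (q - p)) \<le> B k" by (simp only: mem_Collect_eq)
        then have "A k \<bullet> (p + t *\<^sub>R (q - p)) \<le> B k" using k by blast
        then show "t * (A k \<bullet> (q - p)) \<le> - (A k \<bullet> p - B k)"
          by (simp add: inner_add_right algebra_simps)
      qed
    qed
  qed
  then show False using assms(10) by simp
qed

end
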